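(* Let $\delta\in(0,1)$, let $X\subset\mathbb{R}_+$ be a Borel set with $0\in X$, let $x_0>0$, and let $\mathcal B_X=\{F_{(z,\sigma)}:z\in X,\sigma\in[0,1]\}$. For each decision rule $q=(q_0,q_1,q_2,\dots)$ there exists a stationary decision rule $\bar q$ (i.e. one with $\bar q_0=\bar q_1=\bar q_2=\cdots$) such that $R_{\bar q}(x_0,\mathcal B_X)\ge R_q(x_0,\mathcal B_X)$.
   Context: Binary search setting. A binary environment $F_{(z,\sigma)}$ ($z\in X$, $\sigma\in[0,1]$) generates i.i.d. alternatives $x_1,x_2,\dots$, each equal to $z$ with probability $\sigma$ and to $0$ with probability $1-\sigma$. The individual starts with outside option $x_0>0$; payoffs are discounted by $\delta$, and stopping at round $t$ yields $\delta^t\max\{x_0,\dots,x_t\}$ (never stopping yields $0$). A decision rule for binary environments is a sequence $q=(q_0,q_1,\dots)$ with $q_t\in[0,1]$: after a history in which the first $t$ alternatives all equal $0$ it stops with probability $q_t$, and after any history containing a nonzero alternative it stops with probability $1$. For an environment $F$ and history $h$, $U_q(F,h)$ is the expected discounted payoff from $h$ onward (payoff $\delta^{s-t}y_s$ when stopping at round $s$ after history $h_t$), and $V(F,h)$ is the supremum of such expected payoffs over all decision rules. An environment is consistent with a history $h_t=(x_0,\dots,x_t)$ if $x_1,\dots,x_t$ occurs with positive probability under it; a prior is a finitely supported distribution $\mu$ over $\mathcal B_X$, with $U_q(\mu,h)=\sum_F\mu(F\mid h)U_q(F,h)$ ($\mu(\cdot\mid h)$ the Bayesian posterior) and $V(\mu,h)=\sup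 U(\mu,h)$. The performance ratio is $R_q(x_0,\mathcal B_X)=\inf_h\inf_\mu U_q(\mu,h)/V(\mu,h)$, the infima over histories starting with $x_0$ and priors over $\mathcal B_X$ consistent with them. *)

theory Defs
  imports "HOL-Analysis.Analysis" "HOL-Probability.Probability_Mass_Function"
begin

text \<open>A binary environment F_(z,sigma) is represented by its parameter pair (z, sigma).
  A history h_t = (x_0, x_1, ..., x_t) is represented by x_0 together with the list
  [x_1, ..., x_t] of alternatives. A decision rule for binary environments is a
  sequence q :: nat => real with values in [0,1].\<close>

definition binary_rule :: "(nat \<Rightarrow> real) \<Rightarrow> bool" where
  "binary_rule q \<longleftrightarrow> (\<forall>t. 0 \<le> q t \<and> q t \<le> 1)"

definition stationary_rule :: "(nat \<Rightarrow> real) \<Rightarrow> bool" where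
  "stationary_rule q \<longleftrightarrow> (\<forall>t. q t = q 0)"

definition alt_prob :: "real \<times> real \<Rightarrow> real \<Rightarrow> real" where
  "alt_prob F x = (if x = fst F then snd F else 0) + (if x = 0 then 1 - snd F else 0)"

definition hist_prob :: "real \<times> real \<Rightarrow> real list \<Rightarrow> real" where
  "hist_prob F xs = prod_list (map (alt_prob F) xs)"

definition consistent :: "real \<times> real \<Rightarrow> real list \<Rightarrow> bool" where
  "consistent F xs \<longleftrightarrow> hist_prob F xs > 0"

definition nonzero_prob :: "real \<times> real \<Rightarrow> real" where
  "nonzero_prob F = (if fst F = 0 then 0 else snd F)"

text \<open>U_q(F,h): expected discounted payoff from h = (x0, xs) onward under rule q.
  After a history with a nonzero alternative, q stops at once and gets max{x_0,...,x_t}.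
  After the all-zero history of length t, at round t+n (reached with probability
  prod_{k<n} (1-q_{t+k})(1-p), p the probability of a nonzero draw) it stops with
  probability q_{t+n} earning delta^n x_0 (= delta^n max{x_0,0,...,0}), or continues and
  with probability p sees z and stops, earning delta^(n+1) max{x_0,z}.
  Never stopping yields 0.\<close>
definition U_env :: "real \<Rightarrow> (nat \<Rightarrow> real) \<Rightarrow> real \<times> real \<Rightarrow> real \<Rightarrow> real list \<Rightarrow> real" where
  "U_env \<delta> q F x0 xs =
     (if \<exists>x\<in>set xs. x \<noteq> 0 then fold max xs x0
      else (let t = length xs; p = nonzero_prob F in
        (\<Sum>n. \<delta> ^ n * (\<Prod>k<n. (1 - q (t + k)) * (1 - p)) *
              (q (t + n) * fold max xs x0 + (1 - q (t + n)) * \<delta> * p * max (fold max xs x0) (fst F)))))"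

definition V_env :: "real \<Rightarrow> real \<times> real \<Rightarrow> real \<Rightarrow> real list \<Rightarrow> real" where
  "V_env \<delta> F x0 xs = (SUP q \<in> {q. binary_rule q}. U_env \<delta> q F x0 xs)"

definition posterior :: "(real \<times> real) pmf \<Rightarrow> real list \<Rightarrow> real \<times> real \<Rightarrow> real" where
  "posterior \<mu> xs F =
     pmf \<mu> F * hist_prob F xs / (\<Sum>G\<in>set_pmf \<mu>. pmf \<mu> G * hist_prob G xs)"

definition prior_consistent :: "(real \<times> real) pmf \<Rightarrow> real list \<Rightarrow> bool" where
  "prior_consistent \<mu> xs \<longleftrightarrow> (\<Sum>G\<in>set_pmf \<mu>. pmf \<mu> G * hist_prob G xs) > 0"

definition U_prior :: "real \<Rightarrow> (nat \<Rightarrow> real) \<Rightarrow> (real \<times> real) pmf \<Rightarrow> real \<Rightarrow> real list \<Rightarrow> real" where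
  "U_prior \<delta> q \<mu> x0 xs = (\<Sum>F\<in>set_pmf \<mu>. posterior \<mu> xs F * U_env \<delta> q F x0 xs)"

definition V_prior :: "real \<Rightarrow> (real \<times> real) pmf \<Rightarrow> real \<Rightarrow> real list \<Rightarrow> real" where
  "V_prior \<delta> \<mu> x0 xs = (SUP q \<in> {q. binary_rule q}. U_prior \<delta> q \<mu> x0 xs)"

definition binary_prior :: "real set \<Rightarrow> (real \<times> real) pmf \<Rightarrow> bool" where
  "binary_prior X \<mu> \<longleftrightarrow> finite (set_pmf \<mu>) \<and> set_pmf \<mu> \<subseteq> X \<times> {0..1}"

definition perf_ratio :: "real \<Rightarrow> real set \<Rightarrow> real \<Rightarrow> (nat \<Rightarrow> real) \<Rightarrow> real" where
  "perf_ratio \<delta> X x0 q =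
     (INF (xs, \<mu>) \<in> {(xs, \<mu>). binary_prior X \<mu> \<and> prior_consistent \<mu> xs}.
        U_prior \<delta> q \<mu> x0 xs / V_prior \<delta> \<mu> x0 xs)"

end

theory Submission
  imports Defs
begin


definition stayP :: "(nat \<Rightarrow> real) \<Rightarrow> nat \<Rightarrow> nat \<Rightarrow> real" where
  "stayP s t n = (\<Prod>k<n. 1 - s (t + k))"

definition Ug :: "real \<Rightarrow> real \<Rightarrow> real \<Rightarrow> (nat \<Rightarrow> real) \<Rightarrow> nat \<Rightarrow> real" where
  "Ug r a b s t = (\<Sum>n. r ^ n * stayP s t n * (s (t + n) * a + (1 - s (t + n)) * b))"

lemma stayP_bounds:
  assumes "binary_rule s" shows "0 \<le> stayP s t n" "stayP s t n \<le> 1"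
  using assms unfolding stayP_def binary_rule_def
  by (auto intro!: prod_nonneg prod_le_1)

lemma stayP_Suc: "stayP s t (Suc n) = (1 - s t) * stayP s (Suc t) n"
  unfolding stayP_def by (simp add: prod.lessThan_Suc_shift del: prod.lessThan_Suc)

lemma stayP_0[simp]: "stayP s t 0 = 1"
  unfolding stayP_def by simp

lemma term_bounds:
  assumes "binary_rule s" "0 \<le> r" "0 \<le> a" "0 \<le> b"
  shows "0 \<le> r ^ n * stayP s t n * (s (t + n) * a + (1 - s (t + n)) * b)"
    "r ^ n * stayP s t n * (s (t + n) * a + (1 - s (t + n)) * b) \<le> r ^ n * (a + b)"
proof -
  have s: "0 \<le> s (t+n)" "s (t+n) \<le> 1" using assms(1) unfolding binary_rule_def by auto
  have p: "0 \<le> stayP s t n" "stayP s t n \<le> 1" using stayP_bounds[OF assms(1)] by auto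
  have i: "0 \<le> s (t + n) * a + (1 - s (t + n)) * b" using s assms by auto
  have j: "s (t + n) * a + (1 - s (t + n)) * b \<le> a + b"
    using s assms by (smt (verit) mult_left_le_one_le mult_nonneg_nonneg)
  show "0 \<le> r ^ n * stayP s t n * (s (t + n) * a + (1 - s (t + n)) * b)"
    using p i assms by auto
  have "stayP s t n * (s (t + n) * a + (1 - s (t + n)) * b) \<le> a + b"
    using p i j by (meson mult_left_le_one_le order_trans)
  then show "r ^ n * stayP s t n * (s (t + n) * a + (1 - s (t + n)) * b) \<le> r ^ n * (a + b)"
    using assms by (simp add: mult.assoc mult_left_mono)
qed

lemma Ug_summable:
  assumes "binary_rule s" "0 \<le> r" "r < 1" "0 \<le> a" "0 \<le> b"
  shows "summable (\<lambda>n. r ^ n * stayP s t n * (s (t + n) * a + (1 - s (t + n)) * b))"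
proof (rule summable_comparison_test[where g = "\<lambda>n. r ^ n * (a + b)"])
  show "\<exists>N. \<forall>n\<ge>N. norm (r ^ n * stayP s t n * (s (t + n) * a + (1 - s (t + n)) * b)) \<le> r ^ n * (a + b)"
    using term_bounds[OF assms(1,2,4,5)] by auto
  show "summable (\<lambda>n. r ^ n * (a + b))"
    using assms by (intro summable_mult2 summable_geometric) auto
qed

lemma Ug_bounds:
  assumes "binary_rule s" "0 \<le> r" "r < 1" "0 \<le> a" "0 \<le> b"
  shows "0 \<le> Ug r a b s t" "Ug r a b s t \<le> (a + b) / (1 - r)"
proof -
  show "0 \<le> Ug r a b s t" unfolding Ug_def
    using term_bounds[OF assms(1,2,4,5)] Ug_summable[OF assms] by (intro suminf_nonneg) auto
  have g: "(\<lambda>n. r ^ n * (a + b)) sums ((a + b) * (1 / (1 - r)))"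
    using assms geometric_sums[of r] sums_mult2 by fastforce
  have "Ug r a b s t \<le> (\<Sum>n. r ^ n * (a + b))" unfolding Ug_def
    using term_bounds[OF assms(1,2,4,5)] Ug_summable[OF assms] g
    by (intro suminf_le) (auto simp: sums_summable)
  also have "\<dots> = (a + b) / (1 - r)" using g sums_unique by fastforce
  finally show "Ug r a b s t \<le> (a + b) / (1 - r)" .
qed

lemma Ug_rec:
  assumes "binary_rule s" "0 \<le> r" "r < 1" "0 \<le> a" "0 \<le> b"
  shows "Ug r a b s t = s t * a + (1 - s t) * b + (1 - s t) * r * Ug r a b s (Suc t)"
proof -
  let ?f = "\<lambda>n. r ^ n * stayP s t n * (s (t + n) * a + (1 - s (t + n)) * b)"
  let ?g = "\<lambda>n. r ^ n * stayP s (Suc t) n * (s (Suc t + n) * a + (1 - s (Suc t + n)) * b)"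
  have sf: "summable ?f" by (rule Ug_summable[OF assms])
  have sg: "summable ?g" by (rule Ug_summable[OF assms])
  have e: "?f (Suc n) = ((1 - s t) * r) * ?g n" for n
    by (simp add: stayP_Suc)
  have "(\<Sum>n. ?f (Suc n)) = suminf ?f - ?f 0" by (rule suminf_split_head[OF sf])
  moreover have "(\<Sum>n. ?f (Suc n)) = ((1 - s t) * r) * suminf ?g"
    unfolding e using suminf_mult[OF sg] by simp
  ultimately show ?thesis unfolding Ug_def by simp
qed

lemma contraction:
  fixes h :: "nat \<Rightarrow> real"
  assumes "0 \<le> d" "d < 1" "\<And>t. h t \<le> d * max (h (Suc t)) 0" "\<And>t. \<bar>h t\<bar> \<le> B"
  shows "h t \<le> 0"
proof -
  have B: "0 \<le> B" using assms(4)[of 0] by linarith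
  have main: "max (h t) 0 \<le> d ^ n * B" for n t
  proof (induction n arbitrary: t)
    case 0 then show ?case using assms(4)[of t] B by simp
  next
    case (Suc n)
    have "max (h t) 0 \<le> d * max (h (Suc t)) 0" using assms(3)[of t] assms(1) by simp
    also have "\<dots> \<le> d * (d ^ n * B)" using Suc[of "Suc t"] assms(1) by (rule mult_left_mono)
    finally show ?case by simp
  qed
  have "(\<lambda>n. d ^ n * B) \<longlonglongrightarrow> 0 * B"
    using assms(1,2) by (intro tendsto_intros) auto
  then have "max (h t) 0 \<le> 0 * B" by (rule LIMSEQ_le_const) (use main in auto)
  then show ?thesis by simp
qed


lemma Ug_const_shift: "Ug r a b (\<lambda>_. c) t = Ug r a b (\<lambda>_. c) 0"
  unfolding Ug_def stayP_def by simp

lemma Ug_const: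
  assumes "0 \<le> c" "c \<le> 1" "0 \<le> r" "r < 1" "0 \<le> a" "0 \<le> b"
  shows "Ug r a b (\<lambda>_. c) t = (c * a + (1 - c) * b) / (1 - r * (1 - c))"
proof -
  have br: "binary_rule (\<lambda>_. c)" using assms unfolding binary_rule_def by auto
  let ?U = "Ug r a b (\<lambda>_. c) 0"
  have e: "?U = c * a + (1 - c) * b + (1 - c) * r * ?U"
    using Ug_rec[OF br assms(3-6), of 0] Ug_const_shift[of r a b c "Suc 0"] by simp
  have pos: "0 < 1 - r * (1 - c)"
  proof -
    have "r * (1 - c) \<le> r" using assms by (simp add: mult_left_le)
    then show ?thesis using assms by linarith
  qed
  have "?U * (1 - r * (1 - c)) = c * a + (1 - c) * b" using e by (simp add: algebra_simps)
  then have "?U = (c * a + (1 - c) * b) / (1 - r * (1 - c))" using pos by (simp add: field_simps)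
  then show ?thesis using Ug_const_shift by metis
qed

lemma Ug_upper:
  assumes "binary_rule s" "0 \<le> r" "r < 1" "0 \<le> a" "0 \<le> b" "a \<le> W" "b + r * W \<le> W"
  shows "Ug r a b s t \<le> W"
proof -
  let ?h = "\<lambda>t. Ug r a b s t - W"
  have "?h t \<le> 0"
  proof (rule contraction[of r _ "(a + b) / (1 - r) + \<bar>W\<bar>"])
    fix t
    have s: "0 \<le> s t" "s t \<le> 1" using assms(1) unfolding binary_rule_def by auto
    have "?h t = s t * (a - W) + (1 - s t) * (b + r * W - W) + (1 - s t) * r * ?h (Suc t)"
      using Ug_rec[OF assms(1-5), of t] by (simp add: algebra_simps)
    also have "\<dots> \<le> (1 - s t) * r * ?h (Suc t)"
      using s assms(6,7) by (smt (verit) mult_nonneg_nonneg mult_nonneg_nonpos)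
    also have "\<dots> \<le> r * max (?h (Suc t)) 0"
    proof -
      have "(1 - s t) * (r * ?h (Suc t)) \<le> (1 - s t) * (r * max (?h (Suc t)) 0)"
        using s assms(2) by (intro mult_left_mono) auto
      also have "\<dots> \<le> r * max (?h (Suc t)) 0"
        using s assms(2) by (intro mult_left_le_one_le) auto
      finally show ?thesis by (simp add: mult.assoc)
    qed
    finally show "?h t \<le> r * max (?h (Suc t)) 0" .
  next
    fix t show "\<bar>?h t\<bar> \<le> (a + b) / (1 - r) + \<bar>W\<bar>"
      using Ug_bounds[OF assms(1-5), of t] by linarith
  qed (use assms in auto)
  then show ?thesis by simp
qed

lemma Ug_decomp:
  assumes "binary_rule s" "0 \<le> r" "r < 1" "0 \<le> a" "0 \<le> b"
  shows "Ug r a b s t = a * Ug r 1 0 s t + b * (1 - Ug r 1 0 s t) / (1 - r)"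
proof -
  define A where "A = Ug r 1 0 s"
  define h where "h = (\<lambda>t. Ug r a b s t - (a * A t + b * (1 - A t) / (1 - r)))"
  have rA: "A t = s t + (1 - s t) * r * A (Suc t)" for t
    unfolding A_def using Ug_rec[OF assms(1-3), of 1 0 t] by simp
  have hr: "h t = (1 - s t) * r * h (Suc t)" for t
  proof -
    have r1: "1 - r \<noteq> 0" using assms by auto
    show ?thesis unfolding h_def Ug_rec[OF assms, of t] rA[of t]
      using r1 by (simp add: field_simps)
  qed
  have sb: "0 \<le> s t" "s t \<le> 1" for t using assms(1) unfolding binary_rule_def by auto
  have step: "g t \<le> r * max (g (Suc t)) 0" if "\<And>t. g t = (1 - s t) * r * g (Suc t)" for g :: "nat \<Rightarrow> real" and t
  proof -
    have "(1 - s t) * (r * g (Suc t)) \<le> (1 - s t) * (r * max (g (Suc t)) 0)"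
      using sb[of t] assms(2) by (intro mult_left_mono) auto
    also have "\<dots> \<le> r * max (g (Suc t)) 0"
      using sb[of t] assms(2) by (intro mult_left_le_one_le) auto
    finally show ?thesis using that[of t] by (simp add: mult.assoc)
  qed
  define K where "K = (a + b) / (1 - r) + a * (1/(1-r)) + b * (1 + 1 / (1 - r)) / (1 - r)"
  have bd: "\<bar>h t\<bar> \<le> K" for t
  proof -
    have u: "0 \<le> Ug r a b s t" "Ug r a b s t \<le> (a + b) / (1 - r)" using Ug_bounds[OF assms] by auto
    have v: "0 \<le> A t" "A t \<le> 1 / (1 - r)" unfolding A_def using Ug_bounds[OF assms(1-3), of 1 0] by auto
    have r1: "0 < 1 - r" using assms by auto
    have w1: "0 \<le> a * A t" "a * A t \<le> a * (1/(1-r))" using v assms by (auto intro: mult_left_mono simp del: times_divide_eq_right)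
    have w2: "\<bar>1 - A t\<bar> \<le> 1 + 1/(1-r)" using v by auto
    have w3: "\<bar>b * (1 - A t) / (1 - r)\<bar> \<le> b * (1 + 1/(1-r)) / (1 - r)"
      using w2 r1 assms(5) by (simp add: abs_mult divide_right_mono mult_left_mono)
    show ?thesis unfolding h_def K_def using u w1 w3 by linarith
  qed
  have "h t \<le> 0"
    by (rule contraction[where d=r and h=h and B=K]) (use assms step[OF hr] bd in auto)
  moreover have "- h t \<le> 0"
  proof -
    have hr': "(\<lambda>t. - h t) t = (1 - s t) * r * (\<lambda>t. - h t) (Suc t)" for t using hr[of t] by simp
    show ?thesis
      by (rule contraction[where d=r and h="\<lambda>t. - h t" and B=K]) (use assms bd step[OF hr'] in auto)
  qed
  ultimately show ?thesis unfolding h_def A_def by simp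
qed




lemma A_bounds:
  assumes "binary_rule s" "0 \<le> r" "r < 1"
  shows "0 \<le> Ug r 1 0 s t" "Ug r 1 0 s t \<le> 1"
  using Ug_bounds[OF assms, of 1 0] Ug_upper[OF assms, of 1 0 1] assms by auto

lemma phi_facts:
  fixes r c :: real
  assumes "0 \<le> r" "r < 1" "0 \<le> c" "c \<le> 1"
  shows "0 < 1 - r * (1 - c)" "0 \<le> c / (1 - r * (1 - c))" "c / (1 - r * (1 - c)) \<le> 1"
    "c / (1 - r * (1 - c)) = c + (1 - c) * r * (c / (1 - r * (1 - c)))"
    "1 - r \<le> 1 - r * (c / (1 - r * (1 - c)))"
proof -
  have "r * (1 - c) \<le> r" using assms mult_left_le[of "1-c" r] by auto
  then show p: "0 < 1 - r * (1 - c)" using assms by linarith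
  show "0 \<le> c / (1 - r * (1 - c))" using p assms by simp
  have "0 \<le> (1 - c) * (1 - r)" using assms by simp
  then have "c \<le> 1 - r * (1 - c)" by (simp add: algebra_simps)
  then show l1: "c / (1 - r * (1 - c)) \<le> 1" using p by simp
  show "c / (1 - r * (1 - c)) = c + (1 - c) * r * (c / (1 - r * (1 - c)))"
    using p by (simp add: field_simps)
  have "r * (c / (1 - r * (1 - c))) \<le> r" using l1 assms mult_left_le by blast
  then show "1 - r \<le> 1 - r * (c / (1 - r * (1 - c)))" by linarith
qed

lemma key:
  assumes s: "binary_rule s" and r: "0 \<le> r" "r \<le> \<delta>" and d: "\<delta> < 1" and c: "0 \<le> c" "c \<le> 1"
    and lt: "\<And>t. Ug r 1 0 s t < c / (1 - r * (1 - c))"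
  shows "Ug \<delta> 1 0 s 0 < c / (1 - \<delta> * (1 - c))"
proof -
  have r1: "r < 1" using r d by auto
  have d0: "0 \<le> \<delta>" using r by auto
  define pr where "pr = c / (1 - r * (1 - c))"
  define pd where "pd = c / (1 - \<delta> * (1 - c))"
  define kr where "kr = 1 - r * pr"
  define kd where "kd = 1 - \<delta> * pd"
  note fr = phi_facts[OF r(1) r1 c, folded pr_def]
  note fd = phi_facts[OF d0 d c, folded pd_def]
  have kr: "1 - \<delta> \<le> kr" using fr(5) r unfolding kr_def by linarith
  have kd: "1 - \<delta> \<le> kd" using fd(5) unfolding kd_def by linarith
  define E where "E = (\<lambda>t. (Ug r 1 0 s t - pr) / kr)"
  define F where "F = (\<lambda>t. (Ug \<delta> 1 0 s t - pd) / kd)"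
  have sb: "0 \<le> s t" "s t \<le> 1" for t using s unfolding binary_rule_def by auto
  have Er: "E t = (s t - c) + r * (1 - s t) * E (Suc t)" for t
  proof -
    have a: "Ug r 1 0 s t = s t + (1 - s t) * r * Ug r 1 0 s (Suc t)"
      using Ug_rec[OF s r(1) r1, of 1 0 t] by simp
    have fp: "pr = c + r * pr - c * r * pr" using fr(4) by (simp add: algebra_simps)
    have eq: "Ug r 1 0 s t - pr = (s t - c) * kr + r * (1 - s t) * (Ug r 1 0 s (Suc t) - pr)"
      unfolding a kr_def using fp by (simp add: algebra_simps)
    have "kr \<noteq> 0" using kr d by auto
    then show ?thesis unfolding E_def eq by (simp add: add_divide_distrib)
  qed
  have Fr: "F t = (s t - c) + \<delta> * (1 - s t) * F (Suc t)" for t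
  proof -
    have a: "Ug \<delta> 1 0 s t = s t + (1 - s t) * \<delta> * Ug \<delta> 1 0 s (Suc t)"
      using Ug_rec[OF s d0 d, of 1 0 t] by simp
    have fp: "pd = c + \<delta> * pd - c * \<delta> * pd" using fd(4) by (simp add: algebra_simps)
    have eq: "Ug \<delta> 1 0 s t - pd = (s t - c) * kd + \<delta> * (1 - s t) * (Ug \<delta> 1 0 s (Suc t) - pd)"
      unfolding a kd_def using fp by (simp add: algebra_simps)
    have "kd \<noteq> 0" using kd d by auto
    then show ?thesis unfolding F_def eq by (simp add: add_divide_distrib)
  qed
  have krp: "0 < kr" using kr d by auto
  have kdp: "0 < kd" using kd d by auto
  have Eneg: "E t < 0" for t
  proof -
    have "Ug r 1 0 s t - pr < 0" using lt[of t] unfolding pr_def by simp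
    then show ?thesis unfolding E_def using krp by (rule divide_neg_pos)
  qed
  define G where "G = (\<lambda>t. F t - E t)"
  have inv: "1 / k \<le> 1 / (1 - \<delta>)" if "1 - \<delta> \<le> k" for k
    by (rule divide_left_mono) (use that d in auto)
  have Eb: "\<bar>E t\<bar> \<le> 1 / (1 - \<delta>)" for t
  proof -
    have "\<bar>Ug r 1 0 s t - pr\<bar> \<le> 1" using A_bounds[OF s r(1) r1, of t] fr(2,3) by auto
    then have "\<bar>Ug r 1 0 s t - pr\<bar> / kr \<le> 1 / kr" using krp by (intro divide_right_mono) auto
    moreover have "\<bar>E t\<bar> = \<bar>Ug r 1 0 s t - pr\<bar> / kr" unfolding E_def using krp by simp
    ultimately show ?thesis using inv[OF kr] by linarith
  qed
  have Fb: "\<bar>F t\<bar> \<le> 1 / (1 - \<delta>)" for t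
  proof -
    have "\<bar>Ug \<delta> 1 0 s t - pd\<bar> \<le> 1" using A_bounds[OF s d0 d, of t] fd(2,3) by auto
    then have "\<bar>Ug \<delta> 1 0 s t - pd\<bar> / kd \<le> 1 / kd" using kdp by (intro divide_right_mono) auto
    moreover have "\<bar>F t\<bar> = \<bar>Ug \<delta> 1 0 s t - pd\<bar> / kd" unfolding F_def using kdp by simp
    ultimately show ?thesis using inv[OF kd] by linarith
  qed
  have "G 0 \<le> 0"
  proof (rule contraction[where d=\<delta> and h=G and B="2 / (1 - \<delta>)"])
    fix t
    have "G t = (1 - s t) * (\<delta> * G (Suc t) + (\<delta> - r) * E (Suc t))"
      unfolding G_def Er[of t] Fr[of t] by (simp add: algebra_simps)
    also have "\<dots> \<le> (1 - s t) * (\<delta> * G (Suc t))"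
    proof -
      have "(\<delta> - r) * E (Suc t) \<le> 0" using Eneg[of "Suc t"] r by (simp add: mult_nonneg_nonpos)
      then show ?thesis using sb[of t] by (intro mult_left_mono) auto
    qed
    also have "\<dots> \<le> (1 - s t) * (\<delta> * max (G (Suc t)) 0)"
      using sb[of t] d0 by (intro mult_left_mono) auto
    also have "\<dots> \<le> \<delta> * max (G (Suc t)) 0"
      using sb[of t] d0 by (intro mult_left_le_one_le) auto
    finally show "G t \<le> \<delta> * max (G (Suc t)) 0" .
  next
    fix t show "\<bar>G t\<bar> \<le> 2 / (1 - \<delta>)" unfolding G_def using Eb[of t] Fb[of t] by linarith
  qed (use d0 d in auto)
  then have "F 0 < 0" using Eneg[of 0] unfolding G_def by linarith
  then show ?thesis unfolding F_def pd_def[symmetric] using kd d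
    by (simp add: divide_less_0_iff)
qed



definition rr :: "real \<Rightarrow> real \<times> real \<Rightarrow> real" where
  "rr \<delta> F = \<delta> * (1 - nonzero_prob F)"
definition bb :: "real \<Rightarrow> real \<Rightarrow> real \<times> real \<Rightarrow> real" where
  "bb \<delta> x0 F = \<delta> * nonzero_prob F * max x0 (fst F)"
definition WW :: "real \<Rightarrow> real \<Rightarrow> real \<times> real \<Rightarrow> real" where
  "WW \<delta> x0 F = max x0 (bb \<delta> x0 F / (1 - rr \<delta> F))"

lemma params:
  assumes "snd F \<in> {0..1}" "0 < \<delta>" "\<delta> < 1" "0 < x0"
  shows "0 \<le> nonzero_prob F" "nonzero_prob F \<le> 1" "0 \<le> rr \<delta> F" "rr \<delta> F \<le> \<delta>"
    "rr \<delta> F < 1" "0 \<le> bb \<delta> x0 F" "x0 \<le> WW \<delta> x0 F" "0 < 1 - rr \<delta> F"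
proof -
  show p0: "0 \<le> nonzero_prob F" "nonzero_prob F \<le> 1"
    using assms unfolding nonzero_prob_def by auto
  show "0 \<le> rr \<delta> F" unfolding rr_def using p0 assms by simp
  show r1: "rr \<delta> F \<le> \<delta>" unfolding rr_def using p0 assms by (simp add: mult_left_le)
  then show "rr \<delta> F < 1" "0 < 1 - rr \<delta> F" using assms by auto
  show "0 \<le> bb \<delta> x0 F" unfolding bb_def using p0 assms by simp
  show "x0 \<le> WW \<delta> x0 F" unfolding WW_def by simp
qed

lemma fold_max_zero: "\<forall>x\<in>set xs. x = 0 \<Longrightarrow> 0 \<le> (x0::real) \<Longrightarrow> fold max xs x0 = x0"
  by (induction xs arbitrary: x0) (auto simp: max_def)

lemma fold_max_ge: "(x0::real) \<le> fold max xs x0"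
  by (induction xs arbitrary: x0) (auto intro: order_trans[OF max.cobounded2])

lemma U_env_zero:
  assumes "\<forall>x\<in>set xs. x = 0" "0 < x0"
  shows "U_env \<delta> s F x0 xs = Ug (rr \<delta> F) x0 (bb \<delta> x0 F) s (length xs)"
proof -
  have fm: "fold max xs x0 = x0" using fold_max_zero assms by auto
  have nz: "\<not> (\<exists>x\<in>set xs. x \<noteq> 0)" using assms by auto
  show ?thesis
    unfolding U_env_def Ug_def Let_def fm rr_def bb_def stayP_def using nz
    by (simp add: prod.distrib power_mult_distrib mult_ac)
qed

lemma U_env_nonzero: "\<exists>x\<in>set xs. x \<noteq> 0 \<Longrightarrow> U_env \<delta> s F x0 xs = fold max xs x0"
  by (simp add: U_env_def)

lemma Ug_le_WW:
  assumes "binary_rule s" "snd F \<in> {0..1}" "0 < \<delta>" "\<delta> < 1" "0 < x0"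
  shows "Ug (rr \<delta> F) x0 (bb \<delta> x0 F) s t \<le> WW \<delta> x0 F"
proof -
  note pa = params[OF assms(2-5)]
  have "bb \<delta> x0 F / (1 - rr \<delta> F) \<le> WW \<delta> x0 F" unfolding WW_def by simp
  then have "bb \<delta> x0 F \<le> (1 - rr \<delta> F) * WW \<delta> x0 F" using pa(8) by (simp add: divide_le_eq mult.commute)
  then have "bb \<delta> x0 F + rr \<delta> F * WW \<delta> x0 F \<le> WW \<delta> x0 F" by (simp add: algebra_simps)
  then show ?thesis using Ug_upper[OF assms(1) pa(3) pa(5)] pa assms by auto
qed

lemma hist_nonneg: "snd F \<in> {0..1} \<Longrightarrow> 0 \<le> hist_prob F xs"
  unfolding hist_prob_def
proof (induction xs)
  case (Cons x xs)
  have "0 \<le> alt_prob F x" using Cons.prems unfolding alt_prob_def by auto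
  then show ?case using Cons by simp
qed simp

lemma post_facts:
  assumes "binary_prior X \<mu>" "prior_consistent \<mu> xs"
  shows "\<And>F. F \<in> set_pmf \<mu> \<Longrightarrow> 0 \<le> posterior \<mu> xs F" "(\<Sum>F\<in>set_pmf \<mu>. posterior \<mu> xs F) = 1"
proof -
  have den: "0 < (\<Sum>G\<in>set_pmf \<mu>. pmf \<mu> G * hist_prob G xs)" using assms(2) unfolding prior_consistent_def .
  show "0 \<le> posterior \<mu> xs F" if "F \<in> set_pmf \<mu>" for F
  proof -
    have "snd F \<in> {0..1}" using that assms(1) unfolding binary_prior_def by auto
    then show ?thesis unfolding posterior_def using den hist_nonneg by auto
  qed
  show "(\<Sum>F\<in>set_pmf \<mu>. posterior \<mu> xs F) = 1"
    unfolding posterior_def sum_divide_distrib[symmetric] using den by simp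
qed


definition KK :: "real \<Rightarrow> real \<Rightarrow> (real \<times> real) pmf \<Rightarrow> real list \<Rightarrow> real" where
  "KK \<delta> x0 \<mu> xs = (\<Sum>F\<in>set_pmf \<mu>. posterior \<mu> xs F * WW \<delta> x0 F)"

lemma one_rule: "binary_rule (\<lambda>_. 1)" unfolding binary_rule_def by simp

lemma zero_prior:
  assumes bp: "binary_prior X \<mu>" and pc: "prior_consistent \<mu> xs" and z: "\<forall>x\<in>set xs. x = 0"
    and d: "0 < \<delta>" "\<delta> < 1" and x: "0 < x0"
  shows "\<And>s. U_prior \<delta> s \<mu> x0 xs = (\<Sum>F\<in>set_pmf \<mu>. posterior \<mu> xs F * Ug (rr \<delta> F) x0 (bb \<delta> x0 F) s (length xs))"
    "\<And>s. binary_rule s \<Longrightarrow> 0 \<le> U_prior \<delta> s \<mu> x0 xs"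
    "\<And>s. binary_rule s \<Longrightarrow> U_prior \<delta> s \<mu> x0 xs \<le> KK \<delta> x0 \<mu> xs"
    "V_prior \<delta> \<mu> x0 xs \<le> KK \<delta> x0 \<mu> xs"
    "x0 \<le> V_prior \<delta> \<mu> x0 xs"
    "\<And>s. binary_rule s \<Longrightarrow> U_prior \<delta> s \<mu> x0 xs \<le> V_prior \<delta> \<mu> x0 xs"
proof -
  have sF: "snd F \<in> {0..1}" if "F \<in> set_pmf \<mu>" for F using that bp unfolding binary_prior_def by auto
  note pf = post_facts[OF bp pc]
  show U: "U_prior \<delta> s \<mu> x0 xs = (\<Sum>F\<in>set_pmf \<mu>. posterior \<mu> xs F * Ug (rr \<delta> F) x0 (bb \<delta> x0 F) s (length xs))" for s
    unfolding U_prior_def using U_env_zero[OF z x] by simp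
  show nn: "0 \<le> U_prior \<delta> s \<mu> x0 xs" if "binary_rule s" for s
    unfolding U using pf(1) Ug_bounds[OF that] params[OF sF d x] x
    by (intro sum_nonneg mult_nonneg_nonneg) auto
  show le: "U_prior \<delta> s \<mu> x0 xs \<le> KK \<delta> x0 \<mu> xs" if "binary_rule s" for s
    unfolding U KK_def using pf(1) Ug_le_WW[OF that sF d x]
    by (intro sum_mono mult_left_mono) auto
  show "V_prior \<delta> \<mu> x0 xs \<le> KK \<delta> x0 \<mu> xs"
    unfolding V_prior_def using one_rule le by (intro cSUP_least) auto
  have bdd: "bdd_above ((\<lambda>s. U_prior \<delta> s \<mu> x0 xs) ` {q. binary_rule q})"
    using le by (intro bdd_aboveI2[where M = "KK \<delta> x0 \<mu> xs"]) auto
  show "U_prior \<delta> s \<mu> x0 xs \<le> V_prior \<delta> \<mu> x0 xs" if "binary_rule s" for s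
    unfolding V_prior_def using that bdd by (intro cSUP_upper) auto
  moreover have "U_prior \<delta> (\<lambda>_. 1) \<mu> x0 xs = x0"
  proof -
    have "Ug (rr \<delta> F) x0 (bb \<delta> x0 F) (\<lambda>_. 1) (length xs) = x0" if "F \<in> set_pmf \<mu>" for F
      using Ug_const[of 1 "rr \<delta> F" x0 "bb \<delta> x0 F"] params[OF sF[OF that] d x] x by simp
    then have "U_prior \<delta> (\<lambda>_. 1) \<mu> x0 xs = (\<Sum>F\<in>set_pmf \<mu>. posterior \<mu> xs F) * x0"
      unfolding U sum_distrib_right by simp
    then show ?thesis using pf(2) by simp
  qed
  ultimately show "x0 \<le> V_prior \<delta> \<mu> x0 xs" using one_rule by metis
qed

lemma nonzero_prior:
  assumes bp: "binary_prior X \<mu>" and pc: "prior_consistent \<mu> xs" and z: "\<exists>x\<in>set xs. x \<noteq> 0"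
  shows "\<And>s. U_prior \<delta> s \<mu> x0 xs = fold max xs x0" "V_prior \<delta> \<mu> x0 xs = fold max xs x0"
proof -
  note pf = post_facts[OF bp pc]
  show U: "U_prior \<delta> s \<mu> x0 xs = fold max xs x0" for s
    unfolding U_prior_def U_env_nonzero[OF z] sum_distrib_right[symmetric] pf(2) by simp
  show "V_prior \<delta> \<mu> x0 xs = fold max xs x0"
    unfolding V_prior_def U using one_rule by (subst cSUP_const) auto
qed

lemma ratio_nonneg:
  assumes bp: "binary_prior X \<mu>" and pc: "prior_consistent \<mu> xs"
    and d: "0 < \<delta>" "\<delta> < 1" and x: "0 < x0" and s: "binary_rule s"
  shows "0 \<le> U_prior \<delta> s \<mu> x0 xs / V_prior \<delta> \<mu> x0 xs"
proof (cases "\<exists>x\<in>set xs. x \<noteq> 0")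
  case True
  then show ?thesis using nonzero_prior[OF bp pc True] fold_max_ge[of x0 xs] x by simp
next
  case False
  then have z: "\<forall>x\<in>set xs. x = 0" by auto
  note zp = zero_prior[OF bp pc z d x]
  show ?thesis using zp(2)[OF s] zp(5) x by simp
qed


lemma hist_rep: "hist_prob F (replicate t 0) = alt_prob F 0 ^ t"
  unfolding hist_prob_def by (induction t) auto

lemma single_env:
  assumes F: "fst F \<in> X" "snd F \<in> {0..1}" "0 < alt_prob F 0"
    and d: "0 < \<delta>" "\<delta> < 1" and x: "0 < x0"
  shows "binary_prior X (return_pmf F)" "prior_consistent (return_pmf F) (replicate t 0)"
    "\<And>s. U_prior \<delta> s (return_pmf F) x0 (replicate t 0) = Ug (rr \<delta> F) x0 (bb \<delta> x0 F) s t"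
    "V_prior \<delta> (return_pmf F) x0 (replicate t 0) = WW \<delta> x0 F"
proof -
  show bp: "binary_prior X (return_pmf F)" unfolding binary_prior_def using F by (cases F) auto
  have hp: "0 < hist_prob F (replicate t 0)" unfolding hist_rep using F by simp
  show pc: "prior_consistent (return_pmf F) (replicate t 0)"
    unfolding prior_consistent_def using hp by simp
  have post: "posterior (return_pmf F) (replicate t 0) F = 1"
    unfolding posterior_def using hp by simp
  have z: "\<forall>x\<in>set (replicate t (0::real)). x = 0" by simp
  note zp = zero_prior[OF bp pc z d x]
  show U: "U_prior \<delta> s (return_pmf F) x0 (replicate t 0) = Ug (rr \<delta> F) x0 (bb \<delta> x0 F) s t" for s
    unfolding zp(1) using post by simp
  have K: "KK \<delta> x0 (return_pmf F) (replicate t 0) = WW \<delta> x0 F" unfolding KK_def using post by simp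
  have zr: "binary_rule (\<lambda>_. 0)" unfolding binary_rule_def by simp
  note pa = params[OF F(2) d x]
  have "Ug (rr \<delta> F) x0 (bb \<delta> x0 F) (\<lambda>_. 0) t = bb \<delta> x0 F / (1 - rr \<delta> F)"
    using Ug_const[of 0 "rr \<delta> F" x0 "bb \<delta> x0 F" t] pa x by simp
  then have "bb \<delta> x0 F / (1 - rr \<delta> F) \<le> V_prior \<delta> (return_pmf F) x0 (replicate t 0)"
    using zp(6)[OF zr] U by simp
  then have "WW \<delta> x0 F \<le> V_prior \<delta> (return_pmf F) x0 (replicate t 0)"
    unfolding WW_def using zp(5) by simp
  then show "V_prior \<delta> (return_pmf F) x0 (replicate t 0) = WW \<delta> x0 F" using zp(4) K by simp
qed

lemma perf_le:
  assumes bp: "binary_prior X \<mu>" and pc: "prior_consistent \<mu> xs"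
    and d: "0 < \<delta>" "\<delta> < 1" and x: "0 < x0" and s: "binary_rule s"
  shows "perf_ratio \<delta> X x0 s \<le> U_prior \<delta> s \<mu> x0 xs / V_prior \<delta> \<mu> x0 xs"
proof -
  have "bdd_below ((\<lambda>(xs, \<mu>). U_prior \<delta> s \<mu> x0 xs / V_prior \<delta> \<mu> x0 xs) `
          {(xs, \<mu>). binary_prior X \<mu> \<and> prior_consistent \<mu> xs})"
    using ratio_nonneg[OF _ _ d x s] by (intro bdd_belowI[where m=0]) auto
  then have "perf_ratio \<delta> X x0 s \<le> (\<lambda>(xs, \<mu>). U_prior \<delta> s \<mu> x0 xs / V_prior \<delta> \<mu> x0 xs) (xs, \<mu>)"
    unfolding perf_ratio_def by (rule cINF_lower) (use bp pc in auto)
  then show ?thesis by simp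
qed

lemma perf_single:
  assumes F: "fst F \<in> X" "snd F \<in> {0..1}" "0 < alt_prob F 0"
    and d: "0 < \<delta>" "\<delta> < 1" and x: "0 < x0" and s: "binary_rule s"
  shows "perf_ratio \<delta> X x0 s \<le> Ug (rr \<delta> F) x0 (bb \<delta> x0 F) s t / WW \<delta> x0 F"
  using perf_le[OF single_env(1,2)[OF F d x] d x s, of t] single_env(3,4)[OF F d x] by simp

lemma low_alg:
  fixes c \<delta> r x0 b :: real
  assumes "0 \<le> c" "c \<le> 1" "0 < \<delta>" "\<delta> < 1" "0 \<le> r" "r \<le> \<delta>" "0 < x0" "(\<delta> - r) * x0 \<le> b"
  shows "c / (1 - \<delta> * (1 - c)) * x0 \<le> (c * x0 + (1 - c) * b) / (1 - r * (1 - c))"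
proof -
  define u where "u = 1 - c"
  have u: "0 \<le> u" "u \<le> 1" using assms unfolding u_def by auto
  have "\<delta> * u \<le> \<delta> * 1" by (rule mult_left_mono) (use u assms in auto)
  then have d1: "0 < 1 - \<delta> * u" using assms by linarith
  have "r * u \<le> r * 1" by (rule mult_left_mono) (use u assms in auto)
  then have d2: "0 < 1 - r * u" using assms by linarith
  have "(c + u * (\<delta> - r)) * (1 - \<delta> * u) - c * (1 - r * u) = u * u * (\<delta> - r) * (1 - \<delta>)"
    unfolding u_def by (simp add: algebra_simps)
  moreover have "0 \<le> u * u * (\<delta> - r) * (1 - \<delta>)" using u assms by simp
  ultimately have i1: "c * (1 - r * u) * x0 \<le> (c + u * (\<delta> - r)) * (1 - \<delta> * u) * x0"
    using assms(7) by (intro mult_right_mono) auto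
  have "u * ((\<delta> - r) * x0) \<le> u * b" using u assms(8) by (intro mult_left_mono) auto
  then have "(c * x0 + u * ((\<delta> - r) * x0)) * (1 - \<delta> * u) \<le> (c * x0 + u * b) * (1 - \<delta> * u)"
    using d1 by (intro mult_right_mono) auto
  then have "c * x0 * (1 - r * u) \<le> (c * x0 + u * b) * (1 - \<delta> * u)"
    using i1 by (simp add: algebra_simps)
  then show ?thesis unfolding u_def[symmetric] using d1 d2
    by (simp add: divide_simps mult_ac)
qed


lemma LB_feasible:
  assumes d: "0 < \<delta>" "\<delta> < 1" and x: "0 < x0" and q: "binary_rule q"
    and c: "0 \<le> c" "c \<le> 1" and R: "R = c / (1 - \<delta> * (1 - c))" and R0: "0 \<le> R"
    and RA: "R \<le> Ug \<delta> 1 0 q 0"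
    and hR: "\<And>F t. fst F \<in> X \<Longrightarrow> snd F \<in> {0..1} \<Longrightarrow> 0 < alt_prob F 0 \<Longrightarrow>
               R \<le> Ug (rr \<delta> F) x0 (bb \<delta> x0 F) q t / WW \<delta> x0 F"
    and F: "fst F \<in> X" "snd F \<in> {0..1}" "0 < alt_prob F 0"
  shows "R * WW \<delta> x0 F \<le> (c * x0 + (1 - c) * bb \<delta> x0 F) / (1 - rr \<delta> F * (1 - c))"
proof -
  define r where "r = rr \<delta> F"
  define b where "b = bb \<delta> x0 F"
  define D where "D = b / (1 - r)"
  define phi where "phi = c / (1 - r * (1 - c))"
  define S where "S = (c * x0 + (1 - c) * b) / (1 - r * (1 - c))"
  note pa = params[OF F(2) d x, folded r_def b_def]
  have cr: "binary_rule (\<lambda>_. c)" unfolding binary_rule_def using c by simp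
  have Sdec: "S = x0 * phi + D * (1 - phi)"
  proof -
    have "S = Ug r x0 b (\<lambda>_. c) 0" unfolding S_def using Ug_const[OF c pa(3) pa(5) x[THEN less_imp_le] pa(6)] by simp
    also have "\<dots> = x0 * Ug r 1 0 (\<lambda>_. c) 0 + b * (1 - Ug r 1 0 (\<lambda>_. c) 0) / (1 - r)"
      by (rule Ug_decomp[OF cr pa(3) pa(5) x[THEN less_imp_le] pa(6)])
    also have "Ug r 1 0 (\<lambda>_. c) 0 = phi" unfolding phi_def using Ug_const[OF c pa(3) pa(5), of 1 0] by simp
    finally show ?thesis unfolding D_def by simp
  qed
  have low: "R * x0 \<le> S"
  proof -
    have "(\<delta> - r) * x0 \<le> b"
    proof -
      have "(\<delta> - r) * x0 = (\<delta> * nonzero_prob F) * x0" unfolding r_def rr_def by (simp add: algebra_simps)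
      also have "\<dots> \<le> (\<delta> * nonzero_prob F) * max x0 (fst F)"
        using pa(1) d by (intro mult_left_mono) auto
      finally show ?thesis unfolding b_def bb_def by simp
    qed
    then show ?thesis unfolding R S_def using low_alg[OF c d pa(3) pa(4) x] by simp
  qed
  have high: "R * D \<le> S"
  proof (cases "D \<le> x0")
    case True
    then have "R * D \<le> R * x0" using R0 by (rule mult_left_mono)
    then show ?thesis using low by simp
  next
    case False
    show ?thesis
    proof (rule ccontr)
      assume con: "\<not> R * D \<le> S"
      have "\<not> (\<forall>t. Ug r 1 0 q t < phi)"
      proof
        assume "\<forall>t. Ug r 1 0 q t < phi"
        then have "Ug \<delta> 1 0 q 0 < c / (1 - \<delta> * (1 - c))"
          by (intro key[OF q pa(3) pa(4) d(2) c]) (simp add: phi_def)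
        with RA R show False by simp
      qed
      then obtain t where At: "phi \<le> Ug r 1 0 q t" by (auto simp: not_less)
      define A where "A = Ug r 1 0 q t"
      have U: "Ug r x0 b q t = x0 * A + D * (1 - A)"
        unfolding A_def D_def using Ug_decomp[OF q pa(3) pa(5) x[THEN less_imp_le] pa(6)] by simp
      have W: "WW \<delta> x0 F = D" unfolding WW_def D_def using False unfolding D_def b_def r_def by simp
      have Dp: "0 < D" using False x by simp
      have "R \<le> Ug r x0 b q t / D" using hR[OF F, of t] W unfolding r_def b_def by simp
      then have "R * D \<le> Ug r x0 b q t" using Dp by (simp add: le_divide_eq)
      also have "\<dots> = D - A * (D - x0)" unfolding U by (simp add: algebra_simps)
      also have "\<dots> \<le> D - phi * (D - x0)"
        using At False unfolding A_def by (simp add: mult_right_mono)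
      also have "\<dots> = S" unfolding Sdec by (simp add: algebra_simps)
      finally show False using con by simp
    qed
  qed
  have "R * WW \<delta> x0 F \<le> S"
    unfolding WW_def D_def[symmetric, unfolded b_def r_def] using low high
    by (cases "x0 \<le> D") (auto simp: max_def D_def b_def r_def)
  then show ?thesis unfolding S_def r_def b_def .
qed


lemma LB_all:
  assumes d: "0 < \<delta>" "\<delta> < 1" and x: "0 < x0" and q: "binary_rule q"
    and c: "0 \<le> c" "c \<le> 1" and R: "R = c / (1 - \<delta> * (1 - c))" and R0: "0 \<le> R"
    and RA: "R \<le> Ug \<delta> 1 0 q 0"
    and hR: "\<And>F t. fst F \<in> X \<Longrightarrow> snd F \<in> {0..1} \<Longrightarrow> 0 < alt_prob F 0 \<Longrightarrow>
               R \<le> Ug (rr \<delta> F) x0 (bb \<delta> x0 F) q t / WW \<delta> x0 F"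
    and F: "fst F \<in> X" "snd F \<in> {0..1}"
  shows "R * WW \<delta> x0 F \<le> (c * x0 + (1 - c) * bb \<delta> x0 F) / (1 - rr \<delta> F * (1 - c))"
proof (cases "0 < alt_prob F 0")
  case True
  then show ?thesis using LB_feasible[OF d x q c R R0 RA hR F] by blast
next
  case False
  obtain z \<sigma> where Fz: "F = (z, \<sigma>)" by (cases F)
  have sg: "0 \<le> \<sigma>" "\<sigma> \<le> 1" using F(2) Fz by auto
  have z0: "z \<noteq> 0" and s1: "\<sigma> = 1" using False sg unfolding Fz alt_prob_def by (auto split: if_splits)
  define M where "M = max x0 z"
  have eqs: "rr \<delta> F = 0" "bb \<delta> x0 F = \<delta> * M" "WW \<delta> x0 F = max x0 (\<delta> * M)"
    unfolding rr_def bb_def WW_def nonzero_prob_def Fz M_def using z0 s1 by auto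
  define g where "g = (\<lambda>s::real. R * max x0 (\<delta> * s * M / (1 - \<delta> * (1 - s))))"
  define f where "f = (\<lambda>s::real. (c * x0 + (1 - c) * (\<delta> * s * M)) / (1 - \<delta> * (1 - s) * (1 - c)))"
  have ev: "eventually (\<lambda>s. g s \<le> f s) (at_left 1)"
  proof -
    have "eventually (\<lambda>s. s \<in> {0<..<1::real}) (at_left 1)" by (rule eventually_at_left_real) simp
    then show ?thesis
    proof (rule eventually_mono)
      fix s :: real assume s: "s \<in> {0<..<1}"
      define F' where "F' = (z, s)"
      have F': "fst F' \<in> X" "snd F' \<in> {0..1}" "0 < alt_prob F' 0"
        using F Fz s z0 unfolding F'_def alt_prob_def by auto
      have e': "rr \<delta> F' = \<delta> * (1 - s)" "bb \<delta> x0 F' = \<delta> * s * M"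
        "WW \<delta> x0 F' = max x0 (\<delta> * s * M / (1 - \<delta> * (1 - s)))"
        unfolding rr_def bb_def WW_def nonzero_prob_def F'_def M_def using z0 by auto
      show "g s \<le> f s"
        using LB_feasible[OF d x q c R R0 RA hR F'] unfolding e' f_def g_def by simp
    qed
  qed
  have gl: "(g \<longlongrightarrow> g 1) (at_left 1)" unfolding g_def
    by (intro tendsto_intros) (use d in auto)
  have fl: "(f \<longlongrightarrow> f 1) (at_left 1)" unfolding f_def
    by (intro tendsto_intros) (use d in auto)
  have "g 1 \<le> f 1" by (rule tendsto_le[OF trivial_limit_at_left_real fl gl ev])
  then show ?thesis unfolding eqs f_def g_def by simp
qed


theorem proposition4:
  fixes \<delta> x0 :: real and X :: "real set" and q :: "nat \<Rightarrow> real"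
  assumes "0 < \<delta>" "\<delta> < 1"
    and "X \<in> sets borel" "X \<subseteq> {0..}" "0 \<in> X"
    and "x0 > 0"
    and "binary_rule q"
  shows "\<exists>qbar. binary_rule qbar \<and> stationary_rule qbar \<and>
           perf_ratio \<delta> X x0 qbar \<ge> perf_ratio \<delta> X x0 q"
proof -
  note d = assms(1,2) and x = assms(6) and q = assms(7)
  define R where "R = perf_ratio \<delta> X x0 q"
  define F0 where "F0 = ((0::real), (0::real))"
  have F0: "fst F0 \<in> X" "snd F0 \<in> {0..1}" "0 < alt_prob F0 0"
    unfolding F0_def alt_prob_def using assms(5) by auto
  have Sne: "binary_prior X (return_pmf F0)" "prior_consistent (return_pmf F0) []"
    using single_env(1)[OF F0 d x] single_env(2)[OF F0 d x, of 0] by auto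
  have R0: "0 \<le> R" unfolding R_def perf_ratio_def
    using Sne ratio_nonneg[OF _ _ d x q] by (intro cINF_greatest) auto
  have RA: "R \<le> Ug \<delta> 1 0 q 0"
  proof -
    have e: "rr \<delta> F0 = \<delta>" "bb \<delta> x0 F0 = 0" "WW \<delta> x0 F0 = x0"
      unfolding F0_def rr_def bb_def WW_def nonzero_prob_def using x by auto
    have "Ug \<delta> x0 0 q 0 = x0 * Ug \<delta> 1 0 q 0"
      using Ug_decomp[OF q _ d(2), of x0 0 0] d x by simp
    then show ?thesis using perf_single[OF F0 d x q, of 0] x unfolding R_def e by simp
  qed
  have R1: "R \<le> 1" using RA A_bounds[OF q _ d(2), of 0] d by auto
  have hR: "\<And>F t. fst F \<in> X \<Longrightarrow> snd F \<in> {0..1} \<Longrightarrow> 0 < alt_prob F 0 \<Longrightarrow>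
               R \<le> Ug (rr \<delta> F) x0 (bb \<delta> x0 F) q t / WW \<delta> x0 F"
    unfolding R_def using perf_single[OF _ _ _ d x q] by blast
  have dR: "0 < 1 - \<delta> * R"
  proof -
    have "\<delta> * R \<le> \<delta> * 1" using R1 d by (intro mult_left_mono) auto
    then show ?thesis using d by linarith
  qed
  define c where "c = R * (1 - \<delta>) / (1 - \<delta> * R)"
  have c0: "0 \<le> c" unfolding c_def using R0 d dR by simp
  have c1: "c \<le> 1"
  proof -
    have "R * (1 - \<delta>) \<le> 1 - \<delta> * R" using R1 by (simp add: algebra_simps)
    then show ?thesis unfolding c_def using dR by simp
  qed
  have Rc: "R = c / (1 - \<delta> * (1 - c))"
  proof -
    have "1 - \<delta> * (1 - c) = (1 - \<delta>) / (1 - \<delta> * R)"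
      unfolding c_def using dR by (simp add: field_simps)
    then have "c / (1 - \<delta> * (1 - c)) = (R * (1 - \<delta>) / (1 - \<delta> * R)) / ((1 - \<delta>) / (1 - \<delta> * R))"
      unfolding c_def by simp
    also have "\<dots> = R" using dR d by simp
    finally show ?thesis by simp
  qed
  have cr: "binary_rule (\<lambda>_. c)" unfolding binary_rule_def using c0 c1 by simp
  have st: "stationary_rule (\<lambda>_. c)" unfolding stationary_rule_def by simp
  have "R \<le> perf_ratio \<delta> X x0 (\<lambda>_. c)"
    unfolding perf_ratio_def
  proof (rule cINF_greatest)
    show "{(xs, \<mu>). binary_prior X \<mu> \<and> prior_consistent \<mu> xs} \<noteq> {}" using Sne by auto
  next
    fix p assume "p \<in> {(xs, \<mu>). binary_prior X \<mu> \<and> prior_consistent \<mu> xs}"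
    then obtain xs \<mu> where p: "p = (xs, \<mu>)" and bp: "binary_prior X \<mu>" and pc: "prior_consistent \<mu> xs"
      by auto
    show "R \<le> (case p of (xs, \<mu>) \<Rightarrow> U_prior \<delta> (\<lambda>_. c) \<mu> x0 xs / V_prior \<delta> \<mu> x0 xs)"
    proof (cases "\<exists>x\<in>set xs. x \<noteq> 0")
      case True
      have "0 < fold max xs x0" using fold_max_ge[of x0 xs] x by simp
      then show ?thesis unfolding p using nonzero_prior[OF bp pc True] R1 by simp
    next
      case False
      then have z: "\<forall>x\<in>set xs. x = 0" by auto
      note zp = zero_prior[OF bp pc z d x]
      have sF: "fst F \<in> X" "snd F \<in> {0..1}" if "F \<in> set_pmf \<mu>" for F
        using that bp unfolding binary_prior_def by auto
      note pf = post_facts[OF bp pc]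
      have "R * KK \<delta> x0 \<mu> xs = (\<Sum>F\<in>set_pmf \<mu>. posterior \<mu> xs F * (R * WW \<delta> x0 F))"
        unfolding KK_def sum_distrib_left by (simp add: mult_ac)
      also have "\<dots> \<le> (\<Sum>F\<in>set_pmf \<mu>. posterior \<mu> xs F * Ug (rr \<delta> F) x0 (bb \<delta> x0 F) (\<lambda>_. c) (length xs))"
      proof (rule sum_mono)
        fix F assume F: "F \<in> set_pmf \<mu>"
        note pa = params[OF sF(2)[OF F] d x]
        have "Ug (rr \<delta> F) x0 (bb \<delta> x0 F) (\<lambda>_. c) (length xs) =
              (c * x0 + (1 - c) * bb \<delta> x0 F) / (1 - rr \<delta> F * (1 - c))"
          using Ug_const[OF c0 c1 pa(3) pa(5) x[THEN less_imp_le] pa(6)] by simp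
        then have "R * WW \<delta> x0 F \<le> Ug (rr \<delta> F) x0 (bb \<delta> x0 F) (\<lambda>_. c) (length xs)"
          using LB_all[OF d x q c0 c1 Rc R0 RA hR sF[OF F]] by simp
        then show "posterior \<mu> xs F * (R * WW \<delta> x0 F) \<le>
                   posterior \<mu> xs F * Ug (rr \<delta> F) x0 (bb \<delta> x0 F) (\<lambda>_. c) (length xs)"
          using pf(1)[OF F] by (rule mult_left_mono)
      qed
      also have "\<dots> = U_prior \<delta> (\<lambda>_. c) \<mu> x0 xs" using zp(1) by simp
      finally have KU: "R * KK \<delta> x0 \<mu> xs \<le> U_prior \<delta> (\<lambda>_. c) \<mu> x0 xs" .
      have "R * V_prior \<delta> \<mu> x0 xs \<le> R * KK \<delta> x0 \<mu> xs" using zp(4) R0 by (rule mult_left_mono)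
      then have "R * V_prior \<delta> \<mu> x0 xs \<le> U_prior \<delta> (\<lambda>_. c) \<mu> x0 xs" using KU by linarith
      moreover have "0 < V_prior \<delta> \<mu> x0 xs" using zp(5) x by linarith
      ultimately show ?thesis unfolding p by (simp add: le_divide_eq)
    qed
  qed
  then show ?thesis using cr st unfolding R_def by blast
qed

end
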